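(* Let $P$ be a convex polygon with no two edges parallel, and let $e_i,e_j$ be edges with $e_i\prec e_j$. (1) In the domain $P$, the function $\mathrm{disprod}_{\ell_i,\ell_j}$ achieves its maximum value at a unique point, denoted $Z_i^j$. (2) The point $Z_i^j$ lies on $\partial P$; moreover it lies in both $[\mathsf{D}_i\circlearrowright \mathsf{D}_j]$ and $(v_{j+1}\circlearrowright v_i)$. (3) If $Z_i^j$ lies in some edge $e_k$, then it is the midpoint of $\mathsf{I}_{i,k}$ and $\mathsf{I}_{j,k}$.
   Context: $P$ is a compact convex polygon with boundary $\partial P$, edges $e_1,\ldots,e_n$ in clockwise order and vertices $v_1,\ldots,v_n$, where $e_i$ is the open segment from $v_i$ to $v_{i+1}$ (indices modulo $n$). $\ell_i$ is the line containing $e_i$, and $\mathsf{I}_{i,j}$ is the intersection point of $\ell_i$ and $\ell_j$. $d_l(X)$ is the distance from $X$ to line $l$ and $\mathrm{disprod}_{l,l'}(X)=d_l(X)d_{l'}(X)$. For distinct edges, $e_i\prec e_j$ ("$e_i$ is chasing $e_j$") means that $\mathsf{I}_{i,j}$ lies between $e_i$ and $e_j$ in the clockwise sense, i.e. $\mathsf{I}_{i,j}=v_i+t(v_{i+1}-v_i)$ for some $t\ge 1$ (equivalently, the clockwise turning angle from the direction $v_{i+1}-v_i$ to the direction $v_{j+1}-v_j$ lies strictly between $0$ and $\pi$); for any two distinct edges exactly one chases the other. $\mathsf{D}_i$ denotes the unique vertex of $P$ at largest distance from $\ell_i$. For $X,X'\in\partial P$, $[X\circlearrowright X']$ is the closed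 portion of $\partial P$ traversed moving clockwise from $X$ to $X'$, and $(X\circlearrowright X')$ is the same portion without its endpoints. *)

theory Defs
  imports "HOL-Analysis.Analysis"
begin

type_synonym pt = "real \<times> real"

definition cross :: "pt \<Rightarrow> pt \<Rightarrow> real" where
  "cross a b = fst a * snd b - snd a * fst b"

text \<open>Vertices are v 0, ..., v (n-1) (0-based), indices taken modulo n.\<close>
definition vx :: "nat \<Rightarrow> (nat \<Rightarrow> pt) \<Rightarrow> int \<Rightarrow> pt" where
  "vx n v k = v (nat (k mod int n))"

text \<open>Strictly convex polygon with vertices listed in clockwise order: every other vertex
  lies strictly to the right of the directed line from v k to v (k+1).\<close>
definition cw_convex_polygon :: "nat \<Rightarrow> (nat \<Rightarrow> pt) \<Rightarrow> bool" where
  "cw_convex_polygon n v \<longleftrightarrow> n \<ge> 3 \<and>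
     (\<forall>k<n. \<forall>m<n. m \<noteq> k \<and> m \<noteq> Suc k mod n \<longrightarrow>
        cross (v (Suc k mod n) - v k) (v m - v k) < 0)"

definition polygon :: "nat \<Rightarrow> (nat \<Rightarrow> pt) \<Rightarrow> pt set" where
  "polygon n v = convex hull (v ` {..<n})"

definition edge :: "nat \<Rightarrow> (nat \<Rightarrow> pt) \<Rightarrow> nat \<Rightarrow> pt set" where
  "edge n v k = open_segment (v k) (v (Suc k mod n))"

definition eline :: "nat \<Rightarrow> (nat \<Rightarrow> pt) \<Rightarrow> nat \<Rightarrow> pt set" where
  "eline n v k = affine hull {v k, v (Suc k mod n)}"

definition no_parallel_edges :: "nat \<Rightarrow> (nat \<Rightarrow> pt) \<Rightarrow> bool" where
  "no_parallel_edges n v \<longleftrightarrow> (\<forall>k<n. \<forall>m<n. k \<noteq> m \<longrightarrow>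
      cross (v (Suc k mod n) - v k) (v (Suc m mod n) - v m) \<noteq> 0)"

definition isect :: "nat \<Rightarrow> (nat \<Rightarrow> pt) \<Rightarrow> nat \<Rightarrow> nat \<Rightarrow> pt" where
  "isect n v i j = (THE X. X \<in> eline n v i \<inter> eline n v j)"

definition chasing :: "nat \<Rightarrow> (nat \<Rightarrow> pt) \<Rightarrow> nat \<Rightarrow> nat \<Rightarrow> bool" where
  "chasing n v i j \<longleftrightarrow> i \<noteq> j \<and>
     (\<exists>t::real. t \<ge> 1 \<and> isect n v i j = v i + t *\<^sub>R (v (Suc i mod n) - v i))"

definition disprod :: "pt set \<Rightarrow> pt set \<Rightarrow> pt \<Rightarrow> real" where
  "disprod l l' X = infdist X l * infdist X l'"

definition farthest_vertex :: "nat \<Rightarrow> (nat \<Rightarrow> pt) \<Rightarrow> nat \<Rightarrow> pt" where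
  "farthest_vertex n v i = (THE X. X \<in> v ` {..<n} \<and>
      (\<forall>Y \<in> v ` {..<n}. infdist Y (eline n v i) \<le> infdist X (eline n v i)))"

text \<open>Clockwise arc-length-free parametrisation of the boundary: parameter s in [k, k+1]
  runs along the edge from v k to v (k+1); periodic with period n.\<close>
definition bpt :: "nat \<Rightarrow> (nat \<Rightarrow> pt) \<Rightarrow> real \<Rightarrow> pt" where
  "bpt n v s = vx n v \<lfloor>s\<rfloor> + (s - of_int \<lfloor>s\<rfloor>) *\<^sub>R (vx n v (\<lfloor>s\<rfloor> + 1) - vx n v \<lfloor>s\<rfloor>)"

text \<open>[X cw X']: closed clockwise arc from X to X'.\<close>
definition arc_cc :: "nat \<Rightarrow> (nat \<Rightarrow> pt) \<Rightarrow> pt \<Rightarrow> pt \<Rightarrow> pt set" where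
  "arc_cc n v X X' = {bpt n v u | u. \<exists>s s'. 0 \<le> s \<and> s < real n \<and> bpt n v s = X \<and>
      s \<le> s' \<and> s' < s + real n \<and> bpt n v s' = X' \<and> s \<le> u \<and> u \<le> s'}"

text \<open>(X cw X'): the same arc without its endpoints.\<close>
definition arc_oo :: "nat \<Rightarrow> (nat \<Rightarrow> pt) \<Rightarrow> pt \<Rightarrow> pt \<Rightarrow> pt set" where
  "arc_oo n v X X' = {bpt n v u | u. \<exists>s s'. 0 \<le> s \<and> s < real n \<and> bpt n v s = X \<and>
      s \<le> s' \<and> s' < s + real n \<and> bpt n v s' = X' \<and> s < u \<and> u < s'}"

end

theory Submission
  imports Defs
begin


lemma cross_simps:
  "cross (a + b) c = cross a c + cross b c"
  "cross a (b + c) = cross a b + cross a c"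
  "cross (a - b) c = cross a c - cross b c"
  "cross a (b - c) = cross a b - cross a c"
  "cross (r *\<^sub>R a) c = r * cross a c"
  "cross a (r *\<^sub>R c) = r * cross a c"
  "cross (- a) c = - cross a c"
  "cross a (- c) = - cross a c"
  "cross a a = 0"
  "cross 0 a = 0" "cross a 0 = 0"
  by (auto simp: cross_def algebra_simps)

lemma cross_antisym: "cross a b = - cross b a"
  by (simp add: cross_def)

lemma plucker: "cross h y * cross d z - cross h z * cross d y = cross h d * cross y z"
  by (simp add: cross_def algebra_simps)

lemma cramer: "cross a b *\<^sub>R x = cross x b *\<^sub>R a + cross a x *\<^sub>R b"
  by (cases a; cases b; cases x) (simp add: cross_def algebra_simps)

lemma cross_indep_zero:
  assumes "cross a b \<noteq> 0" "cross a x = 0" "cross b x = 0"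
  shows "x = 0"
proof -
  have "cross x b = 0" using assms(3) cross_antisym[of x b] by simp
  then have "cross a b *\<^sub>R x = 0" using cramer[of a b x] assms(2) by simp
  then show ?thesis using assms(1) by simp
qed

lemma cross_all_zero:
  assumes "\<And>z. cross h z = 0" shows "h = 0"
proof -
  have "cross h (1,0) = 0" "cross h (0,1) = 0" using assms by auto
  then show ?thesis by (cases h) (simp add: cross_def zero_prod_def)
qed

lemma cross_sum: "finite A \<Longrightarrow> cross (sum f A) h = (\<Sum>x\<in>A. cross (f x) h)"
  by (induction A rule: finite_induct) (auto simp: cross_simps)

lemma cross_le_norm: "\<bar>cross d z\<bar> \<le> norm d * norm z"
proof -
  obtain d1 d2 z1 z2 where dz: "d = (d1,d2)" "z = (z1,z2)" by (cases d, cases z)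
  have nd: "norm d = sqrt (d1^2 + d2^2)" "norm z = sqrt (z1^2+z2^2)"
    using dz by (auto simp: norm_Pair)
  have id: "(d1^2 + d2^2) * (z1^2+z2^2) - (d1*z2 - d2*z1)^2 = (d1*z1+d2*z2)^2"
    by (simp add: power2_eq_square algebra_simps)
  have "(cross d z)^2 \<le> (d1^2 + d2^2) * (z1^2+z2^2)"
  proof -
    have c: "(cross d z)^2 = (d1*z2 - d2*z1)^2" by (simp add: dz cross_def)
    have "0 \<le> (d1*z1+d2*z2)^2" by simp
    then show ?thesis using id c by linarith
  qed
  then have "sqrt ((cross d z)^2) \<le> sqrt ((d1^2 + d2^2) * (z1^2+z2^2))"
    using real_sqrt_le_mono by blast
  then show ?thesis by (simp add: nd real_sqrt_mult)
qed

lemma line_iff: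
  fixes a b X :: pt
  assumes "a \<noteq> b"
  shows "X \<in> affine hull {a,b} \<longleftrightarrow> cross (b - a) (X - a) = 0"
proof
  assume "X \<in> affine hull {a,b}"
  then obtain u t where X: "X = u *\<^sub>R a + t *\<^sub>R b" "u + t = 1" by (auto simp: affine_hull_2)
  then have u: "u = 1 - t" by simp
  have "X - a = t *\<^sub>R (b - a)"
    unfolding X(1) u by (simp add: scaleR_diff_left scaleR_diff_right)
  then show "cross (b - a) (X - a) = 0" by (simp add: cross_simps)
next
  assume c: "cross (b - a) (X - a) = 0"
  obtain a1 a2 b1 b2 x1 x2 where p: "a = (a1,a2)" "b = (b1,b2)" "X = (x1,x2)"
    by (cases a, cases b, cases X)
  have c': "(b1-a1)*(x2-a2) = (b2-a2)*(x1-a1)" using c p by (simp add: cross_def)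
  have "\<exists>t. x1 - a1 = t * (b1 - a1) \<and> x2 - a2 = t * (b2 - a2)"
  proof (cases "b1 = a1")
    case False
    have "x2 - a2 = (b1-a1)*(x2-a2)/(b1-a1)" using False by simp
    also have "\<dots> = ((x1-a1)/(b1-a1)) * (b2 - a2)" using c' by simp
    finally show ?thesis using False by (intro exI[of _ "(x1-a1)/(b1-a1)"]) simp
  next
    case True
    then have ne: "b2 \<noteq> a2" using assms p by auto
    have "x1 - a1 = 0" using c' True ne by simp
    then show ?thesis using ne True by (intro exI[of _ "(x2-a2)/(b2-a2)"]) simp
  qed
  then obtain t where t: "x1 - a1 = t * (b1 - a1)" "x2 - a2 = t * (b2 - a2)" by blast
  have e1: "x1 = (1-t)*a1 + t*b1" using t(1) by (simp add: algebra_simps)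
  have e2: "x2 = (1-t)*a2 + t*b2" using t(2) by (simp add: algebra_simps)
  have "X = (1 - t) *\<^sub>R a + t *\<^sub>R b" using e1 e2 p by simp
  then show "X \<in> affine hull {a,b}" unfolding affine_hull_2 by force
qed

lemma infdist_line:
  fixes a b X :: pt
  assumes "a \<noteq> b"
  shows "infdist X (affine hull {a,b}) = \<bar>cross (b - a) (X - a)\<bar> / norm (b - a)"
proof -
  define d where "d = b - a"
  have dnz: "d \<noteq> 0" using assms d_def by auto
  have nd: "norm d > 0" using dnz by simp
  have ne: "affine hull {a,b} \<noteq> {}" by simp
  have lo: "\<bar>cross d (X - a)\<bar> / norm d \<le> dist X Y" if "Y \<in> affine hull {a,b}" for Y
  proof -
    have "cross d (Y - a) = 0" using that line_iff[OF assms] d_def by simp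
    moreover have "cross d (X - Y) = cross d (X - a) - cross d (Y - a)"
      by (simp add: cross_def algebra_simps)
    ultimately have "cross d (X - Y) = cross d (X - a)"
      by simp
    then have "\<bar>cross d (X - a)\<bar> \<le> norm d * dist X Y" using cross_le_norm[of d "X - Y"]
      by (simp add: dist_norm)
    then show ?thesis using nd by (simp add: divide_le_eq mult.commute)
  qed
  obtain d1 d2 y1 y2 where dd: "d = (d1,d2)" "X - a = (y1,y2)" by (cases d, cases "X - a")
  define D where "D = d1^2 + d2^2"
  have "d1 \<noteq> 0 \<or> d2 \<noteq> 0" using dnz dd by (auto simp: zero_prod_def)
  then have Dp: "D > 0" unfolding D_def by (simp add: sum_power2_gt_zero_iff)
  define t where "t = (d1*y1 + d2*y2)/D"
  define Y0 where "Y0 = a + t *\<^sub>R d"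
  have Y0in: "Y0 \<in> affine hull {a,b}"
    unfolding line_iff[OF assms] Y0_def d_def by (simp add: cross_simps)
  have "X - Y0 = (X - a) - t *\<^sub>R d" unfolding Y0_def by simp
  also have "\<dots> = (y1 - t*d1, y2 - t*d2)" using dd by simp
  finally have XY: "X - Y0 = (y1 - t*d1, y2 - t*d2)" .
  have nrm: "(dist X Y0)^2 = (y1 - t*d1)^2 + (y2 - t*d2)^2"
    unfolding dist_norm XY by (simp add: norm_Pair)
  have tD: "t * D = d1*y1 + d2*y2" unfolding t_def using Dp by simp
  have "((y1 - t*d1)^2 + (y2 - t*d2)^2) * D = (y1^2+y2^2)*D - 2*(t*D)*(d1*y1+d2*y2) + (t*D)*(t*D)"
    unfolding D_def power2_eq_square by algebra
  also have "\<dots> = (y1^2+y2^2)*D - (d1*y1+d2*y2)^2"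
    unfolding tD power2_eq_square by algebra
  also have "\<dots> = (d1*y2 - d2*y1)^2"
    unfolding D_def power2_eq_square by algebra
  finally have k1: "((y1 - t*d1)^2 + (y2 - t*d2)^2) * D = (d1*y2 - d2*y1)^2" .
  have k2: "cross d (X - a) = d1*y2 - d2*y1" using dd by (simp add: cross_def)
  have k3: "(norm d)^2 = D" using dd by (simp add: norm_Pair D_def)
  have "(dist X Y0)^2 = ((y1 - t*d1)^2 + (y2 - t*d2)^2) * D / D" using Dp nrm by simp
  also have "\<dots> = (d1*y2 - d2*y1)^2 / D" using k1 by simp
  also have "\<dots> = (\<bar>cross d (X - a)\<bar> / norm d)^2"
    by (simp only: power_divide k3 power2_abs k2)
  finally have sq: "(dist X Y0)^2 = (\<bar>cross d (X - a)\<bar> / norm d)^2" .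
  from sq have eq: "dist X Y0 = \<bar>cross d (X - a)\<bar> / norm d"
    by (rule power2_eq_imp_eq) (use nd in auto)
  have "infdist X (affine hull {a,b}) \<le> \<bar>cross d (X - a)\<bar> / norm d"
    using infdist_le[OF Y0in, of X] eq by simp
  moreover have "\<bar>cross d (X - a)\<bar> / norm d \<le> infdist X (affine hull {a,b})"
    unfolding infdist_notempty[OF ne] by (rule cINF_greatest[OF ne lo])
  ultimately show ?thesis using d_def by simp
qed



locale cwp =
  fixes n :: nat and v :: "nat \<Rightarrow> pt"
  assumes cw: "cw_convex_polygon n v"
begin

abbreviation nx where "nx k \<equiv> Suc k mod n"

definition w where "w k = v (nx k) - v k"
definition L where "L k X = cross (X - v k) (w k)"

lemma n3: "n \<ge> 3" using cw by (simp add: cw_convex_polygon_def)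
lemma npos: "n > 0" using n3 by simp

lemma nx_lt: "nx k < n" using npos by simp

lemma edge_pos: "k < n \<Longrightarrow> m < n \<Longrightarrow> m \<noteq> k \<Longrightarrow> m \<noteq> nx k \<Longrightarrow> L k (v m) > 0"
  using cw unfolding cw_convex_polygon_def L_def w_def
  by (metis cross_antisym neg_0_less_iff_less)

lemma L_lin: "L k X = cross X (w k) - cross (v k) (w k)"
  by (simp add: L_def cross_simps)

lemma L_diff: "L k X - L k Y = cross (X - Y) (w k)"
  by (simp add: L_lin cross_simps)

lemma L_add: "L k (X + Y) = L k X + cross Y (w k)"
  by (simp add: L_lin cross_simps)

lemma L_comb: "L k ((1 - t) *\<^sub>R X + t *\<^sub>R Y) = (1 - t) * L k X + t * L k Y"
  by (simp add: L_lin cross_simps algebra_simps)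

lemma L_mid: "L k (midpoint X Y) = (L k X + L k Y) / 2"
  by (simp add: L_lin cross_simps midpoint_def algebra_simps)

lemma L_vk: "L k (v k) = 0" by (simp add: L_def cross_simps)
lemma L_vnx: "L k (v (nx k)) = 0" by (simp add: L_def w_def cross_simps)

definition ix where "ix a e = (a + e) mod n"

lemma ix_eq: "a < n \<Longrightarrow> e < n \<Longrightarrow> ix a e = (if a + e < n then a + e else a + e - n)"
  unfolding ix_def by (simp add: mod_if)

lemma ix_lt: "ix a e < n" unfolding ix_def using npos by simp

lemma ix_Suc: "nx (ix a e) = ix a (Suc e)"
  unfolding ix_def by (simp add: mod_Suc_eq)

lemma ix_0: "a < n \<Longrightarrow> ix a 0 = a" unfolding ix_def by simp

lemma ix_inj: "a < n \<Longrightarrow> e < n \<Longrightarrow> e' < n \<Longrightarrow> ix a e = ix a e' \<Longrightarrow> e = e'"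
  by (simp add: ix_eq split: if_splits)

lemma ix_n: "a < n \<Longrightarrow> ix a n = a" unfolding ix_def by simp

lemma w_nz: "k < n \<Longrightarrow> w k \<noteq> 0"
proof
  assume k: "k < n" and w0: "w k = 0"
  have "ix k 2 < n" "ix k 2 \<noteq> k" "ix k 2 \<noteq> nx k"
    using ix_inj[OF k, of 2 0] ix_inj[OF k, of 2 1] n3 k ix_lt ix_0[OF k] ix_Suc[of k 0]
    by auto
  then have "L k (v (ix k 2)) > 0" using edge_pos k by blast
  then show False using w0 by (simp add: L_def cross_simps)
qed

lemma v_inj: "k < n \<Longrightarrow> m < n \<Longrightarrow> v k = v m \<Longrightarrow> k = m"
proof (rule ccontr)
  assume k: "k < n" "m < n" "v k = v m" "k \<noteq> m"
  show False
  proof (cases "m = nx k")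
    case True
    then show ?thesis using w_nz[OF k(1)] k(3) by (simp add: w_def)
  next
    case False
    then have "L k (v m) > 0" using edge_pos k by auto
    then show ?thesis using k(3) L_vk[of k] by simp
  qed
qed

lemma nx_inj: "k < n \<Longrightarrow> m < n \<Longrightarrow> nx k = nx m \<Longrightarrow> k = m"
  using npos by (simp add: mod_Suc split: if_splits)

definition P where "P = convex hull (v ` {..<n})"

lemma P_eq: "polygon n v = P" by (simp add: polygon_def P_def)

lemma finV: "finite (v ` {..<n})" by simp

lemma compactP: "compact P"
  unfolding P_def by (rule finite_imp_compact_convex_hull[OF finV])

lemma convexP: "convex P" unfolding P_def by simp

lemma vP: "m < n \<Longrightarrow> v m \<in> P" unfolding P_def by (rule hull_inc) simp

lemma hull_le: 
  assumes "\<And>m. m < n \<Longrightarrow> cross (v m) h \<le> c" and "X \<in> P"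
  shows "cross X h \<le> c"
proof -
  have cv: "convex {X. cross X h \<le> c}"
    unfolding convex_def
  proof (intro ballI allI impI, simp)
    fix x y :: pt and u t :: real
    assume "cross x h \<le> c" "cross y h \<le> c" "0 \<le> u" "0 \<le> t" "u + t = 1"
    then have "u * cross x h + t * cross y h \<le> u * c + t * c"
      by (simp add: add_mono mult_left_mono)
    moreover have "u * c + t * c = c" using \<open>u + t = 1\<close>
      by (metis distrib_right mult_1)
    ultimately show "cross (u *\<^sub>R x + t *\<^sub>R y) h \<le> c"
      by (simp add: cross_simps)
  qed
  have "v ` {..<n} \<subseteq> {X. cross X h \<le> c}" using assms(1) by auto
  then have "P \<subseteq> {X. cross X h \<le> c}" unfolding P_def using cv by (rule hull_minimal)
  then show ?thesis using assms(2) by auto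
qed

lemma L_nonneg: "k < n \<Longrightarrow> X \<in> P \<Longrightarrow> L k X \<ge> 0"
proof -
  assume k: "k < n" and X: "X \<in> P"
  have "L k (v m) \<ge> 0" if "m < n" for m
    using edge_pos[OF k that] L_vk L_vnx
    by (metis less_eq_real_def)
  then have "cross (v m) (- w k) \<le> - cross (v k) (w k)" if "m < n" for m
    using that by (simp add: L_lin cross_simps)
  from hull_le[OF this X] show ?thesis by (simp add: L_lin cross_simps)
qed

lemma L_le_max:
  assumes "\<And>m. m < n \<Longrightarrow> L k (v m) \<le> c" "X \<in> P"
  shows "L k X \<le> c"
proof -
  have "cross (v m) (w k) \<le> c + cross (v k) (w k)" if "m < n" for m
    using assms(1)[OF that] by (simp add: L_lin)
  from hull_le[OF this assms(2)] show ?thesis by (simp add: L_lin)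
qed

end


lemma trans3:
  assumes "cross u x \<le> 0" "cross u y < 0" "cross u z < 0" "cross x y < 0" "cross y z < 0"
  shows "cross x z < 0"
proof -
  have e: "cross u y * cross x z - cross u z * cross x y = cross u x * cross y z"
    by (rule plucker)
  have "cross u z * cross x y > 0" using assms by (simp add: mult_neg_neg)
  moreover have "cross u x * cross y z \<ge> 0" using assms by (simp add: mult_nonpos_nonpos)
  ultimately have "cross u y * cross x z > 0" using e by linarith
  then show ?thesis using assms(2) by (simp add: zero_less_mult_iff)
qed

context cwp begin

lemma consec:
  assumes a: "a < n" and e: "1 \<le> e" "Suc e < n"
  shows "cross (v (ix a e) - v a) (v (ix a (Suc e)) - v a) < 0"
proof -
  have k: "ix a e < n" by (rule ix_lt)
  have "a \<noteq> ix a e" using ix_inj[OF a, of e 0] ix_0[OF a] e by auto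
  moreover have "a \<noteq> nx (ix a e)" unfolding ix_Suc using ix_inj[OF a, of "Suc e" 0] ix_0[OF a] e by auto
  ultimately have "L (ix a e) (v a) > 0" using edge_pos[OF k a] by auto
  moreover have "L (ix a e) (v a) = - cross (v (ix a e) - v a) (v (ix a (Suc e)) - v a)"
    by (simp add: L_def w_def ix_Suc cross_def algebra_simps)
  ultimately show ?thesis by simp
qed

lemma first:
  assumes a: "a < n" and e: "2 \<le> e" "e < n"
  shows "cross (v (ix a 1) - v a) (v (ix a e) - v a) < 0"
proof -
  have n1: "nx a = ix a 1" using ix_Suc[of a 0] ix_0[OF a] by simp
  have "ix a e \<noteq> a" using ix_inj[OF a, of e 0] ix_0[OF a] e by auto
  moreover have "ix a e \<noteq> nx a" unfolding n1 using ix_inj[OF a, of e 1] e by auto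
  ultimately have "L a (v (ix a e)) > 0" using edge_pos[OF a ix_lt] by auto
  then show ?thesis unfolding L_def w_def n1 using cross_antisym[of "v (ix a e) - v a"] by simp
qed

lemma claimC:
  assumes a: "a < n" and e: "1 \<le> e"
  shows "e < e' \<Longrightarrow> e' < n \<Longrightarrow> cross (v (ix a e) - v a) (v (ix a e') - v a) < 0"
proof (induction e')
  case 0
  then show ?case by simp
next
  case (Suc e'')
  show ?case
  proof (cases "e = e''")
    case True
    then show ?thesis using consec[OF a e] Suc.prems by simp
  next
    case False
    then have ee: "e < e''" using Suc.prems by simp
    have h1: "cross (v (ix a e) - v a) (v (ix a e'') - v a) < 0" using Suc.IH ee Suc.prems by simp
    have h2: "cross (v (ix a e'') - v a) (v (ix a (Suc e'')) - v a) < 0"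
      using consec[OF a, of e''] ee e Suc.prems by simp
    have u1: "cross (v (ix a 1) - v a) (v (ix a e) - v a) \<le> 0"
    proof (cases "e = 1")
      case True then show ?thesis by (simp add: cross_simps)
    next
      case False then show ?thesis using first[OF a, of e] e ee Suc.prems by simp
    qed
    have u2: "cross (v (ix a 1) - v a) (v (ix a e'') - v a) < 0"
      using first[OF a, of e''] e ee Suc.prems by simp
    have u3: "cross (v (ix a 1) - v a) (v (ix a (Suc e'')) - v a) < 0"
      using first[OF a, of "Suc e''"] e ee Suc.prems by simp
    show ?thesis by (rule trans3[OF u1 u2 u3 h1 h2])
  qed
qed

definition off where "off a m = (if a \<le> m then m - a else m + n - a)"

lemma off_lt: "a < n \<Longrightarrow> m < n \<Longrightarrow> off a m < n"
  unfolding off_def by arith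

lemma ix_off: "a < n \<Longrightarrow> m < n \<Longrightarrow> ix a (off a m) = m"
  by (simp add: off_def ix_eq)

lemma off_ix: "a < n \<Longrightarrow> e < n \<Longrightarrow> off a (ix a e) = e"
  unfolding off_def ix_eq by arith

lemma off_0: "a < n \<Longrightarrow> m < n \<Longrightarrow> off a m = 0 \<longleftrightarrow> m = a"
  by (auto simp: off_def)

lemma off_inj: "a < n \<Longrightarrow> m < n \<Longrightarrow> b < n \<Longrightarrow> off a m = off a b \<Longrightarrow> m = b"
  by (metis ix_off)

lemma off_nx: "a < n \<Longrightarrow> k < n \<Longrightarrow> off a (nx k) = (if off a k = n - 1 then 0 else Suc (off a k))"
proof -
  assume a: "a < n" and k: "k < n"
  have "nx k = ix a (Suc (off a k))" using ix_Suc[of a "off a k"] ix_off[OF a k] by simp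
  moreover have "off a k < n" using off_lt a k by simp
  ultimately show ?thesis using ix_n[OF a] off_ix[OF a, of "Suc (off a k)"] a
    by (cases "off a k = n - 1") (auto simp: off_def)
qed

lemma sideL:
  assumes "a < n" "b < n" "m < n" "off a m < off a b" "m \<noteq> a"
  shows "cross (v b - v a) (v m - v a) > 0"
proof -
  have "off a m \<ge> 1" using off_0[of a m] assms by auto
  then have "cross (v (ix a (off a m)) - v a) (v (ix a (off a b)) - v a) < 0"
    using claimC[OF assms(1)] assms off_lt by blast
  then have "cross (v m - v a) (v b - v a) < 0" using ix_off assms by simp
  then show ?thesis using cross_antisym[of "v b - v a"] by simp
qed

lemma sideR:
  assumes "a < n" "b < n" "m < n" "off a m > off a b" "b \<noteq> a"
  shows "cross (v b - v a) (v m - v a) < 0"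
proof -
  have "off a b \<ge> 1" using off_0[of a b] assms by auto
  then have "cross (v (ix a (off a b)) - v a) (v (ix a (off a m)) - v a) < 0"
    using claimC[OF assms(1)] assms off_lt by blast
  then show ?thesis using ix_off assms by simp
qed

lemma noncol:
  assumes "a < n" "b < n" "m < n" "a \<noteq> b" "m \<noteq> a" "m \<noteq> b"
  shows "cross (v b - v a) (v m - v a) \<noteq> 0"
proof -
  have "off a m \<noteq> off a b" using off_inj assms by blast
  then show ?thesis using sideL[OF assms(1-3)] sideR[OF assms(1-3)] assms
    by (metis less_irrefl linorder_neqE_nat)
qed

lemma off_self1: "a < n \<Longrightarrow> off a (nx a) = 1"
  using off_nx[of a a] off_0[of a a] n3 by simp

lemma maxadj:
  assumes h: "h \<noteq> 0" and ab: "a < n" "b < n" "a \<noteq> b"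
    and mx: "\<And>m. m < n \<Longrightarrow> cross (v m) h \<le> cross (v a) h"
    and eq: "cross (v b) h = cross (v a) h"
  shows "b = nx a \<or> a = nx b"
proof (rule ccontr)
  assume nadj: "\<not> (b = nx a \<or> a = nx b)"
  have m1: "nx a < n" "nx b < n" by (simp_all add: nx_lt)
  have o1: "off a (nx a) = 1" by (rule off_self1[OF ab(1)])
  have ob0: "off a b \<noteq> 0" using off_0 ab by auto
  have ob1: "off a b \<noteq> 1" using o1 off_inj[OF ab(1) ab(2) m1(1)] nadj by auto
  have s1: "cross (v b - v a) (v (nx a) - v a) > 0"
    using sideL[OF ab(1) ab(2) m1(1)] o1 ob0 ob1 o1 off_0[OF ab(1) m1(1)] by simp
  have obn: "off a b \<noteq> n - 1"
  proof
    assume "off a b = n - 1"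
    then have "off a (nx b) = 0" using off_nx[OF ab(1) ab(2)] by simp
    then show False using off_0[OF ab(1) m1(2)] nadj by simp
  qed
  have s2: "cross (v b - v a) (v (nx b) - v a) < 0"
    using sideR[OF ab(1) ab(2) m1(2)] off_nx[OF ab(1) ab(2)] obn ab by simp
  define D where "D = v b - v a"
  define y where "y = v (nx a) - v a"
  define z where "z = v (nx b) - v a"
  have hD: "cross h D = 0" using eq unfolding D_def
    by (simp add: cross_simps cross_antisym[of h])
  have hy: "cross h y \<ge> 0" using mx[OF m1(1)] unfolding y_def
    by (simp add: cross_simps cross_antisym[of h])
  have hz: "cross h z \<ge> 0" using mx[OF m1(2)] unfolding z_def
    by (simp add: cross_simps cross_antisym[of h])
  have pl: "cross h y * cross D z - cross h z * cross D y = 0"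
    using plucker[of h y D z] hD by simp
  have "cross h y * cross D z \<le> 0" using hy s2 D_def z_def by (simp add: mult_nonneg_nonpos)
  moreover have "cross h z * cross D y \<ge> 0" using hz s1 D_def y_def by simp
  ultimately have "cross h y * cross D z = 0" using pl by linarith
  then have hy0: "cross h y = 0" using s2 D_def z_def by simp
  have "cross h q = 0" for q
  proof -
    have "cross h y * cross D q - cross h q * cross D y = 0" using plucker[of h y D q] hD by simp
    then have "cross h q * cross D y = 0" using hy0 by simp
    then show ?thesis using s1 D_def y_def by simp
  qed
  then show False using cross_all_zero h by blast
qed

lemma max3:
  assumes h: "h \<noteq> 0" and abm: "a < n" "b < n" "m < n" "a \<noteq> b" "m \<noteq> a" "m \<noteq> b"
    and eq: "cross (v b) h = cross (v a) h" "cross (v m) h = cross (v a) h"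
  shows False
proof -
  define D where "D = v b - v a"
  define y where "y = v m - v a"
  have hD: "cross h D = 0" using eq unfolding D_def
    by (simp add: cross_simps cross_antisym[of h])
  have hy: "cross h y = 0" using eq unfolding y_def
    by (simp add: cross_simps cross_antisym[of h])
  have nc: "cross D y \<noteq> 0" using noncol[OF abm] D_def y_def by simp
  have "cross h q = 0" for q
  proof -
    have "cross h y * cross D q - cross h q * cross D y = 0" using plucker[of h y D q] hD by simp
    then have "cross h q * cross D y = 0" using hy by simp
    then show ?thesis using nc by simp
  qed
  then show False using cross_all_zero h by blast
qed

end


context cwp begin

lemma vnx_ne: "k < n \<Longrightarrow> v k \<noteq> v (nx k)"
proof
  assume k: "k < n" and e: "v k = v (nx k)"
  then have "k = nx k" using v_inj nx_lt by blast
  then show False using n3 k by (simp add: mod_Suc split: if_splits)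
qed

lemma face:
  assumes h: "h \<noteq> 0" and X: "X \<in> P" and mx: "\<And>Y. Y \<in> P \<Longrightarrow> cross Y h \<le> cross X h"
  shows "\<exists>k<n. \<exists>t. 0 \<le> t \<and> t \<le> 1 \<and> X = (1 - t) *\<^sub>R v k + t *\<^sub>R v (nx k)"
proof -
  define S where "S = v ` {..<n}"
  have fS: "finite S" unfolding S_def by simp
  obtain \<mu> where mu: "\<forall>x\<in>S. 0 \<le> \<mu> x" "sum \<mu> S = 1" "(\<Sum>x\<in>S. \<mu> x *\<^sub>R x) = X"
    using X unfolding P_def S_def[symmetric] convex_hull_finite[OF fS] by blast
  define c where "c = cross X h"
  have le: "cross x h \<le> c" if "x \<in> S" for x
    using mx[of x] that vP unfolding S_def c_def by auto
  have "(\<Sum>x\<in>S. \<mu> x * (c - cross x h)) = c * sum \<mu> S - (\<Sum>x\<in>S. cross (\<mu> x *\<^sub>R x) h)"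
    by (simp add: algebra_simps sum_subtractf sum_distrib_left cross_simps)
  also have "\<dots> = 0" using mu unfolding cross_sum[OF fS, symmetric] c_def by simp
  finally have "(\<Sum>x\<in>S. \<mu> x * (c - cross x h)) = 0" .
  then have z: "\<forall>x\<in>S. \<mu> x * (c - cross x h) = 0"
    using sum_nonneg_eq_0_iff[OF fS, of "\<lambda>x. \<mu> x * (c - cross x h)"] mu(1) le by simp
  have pos: "cross x h = c" if "x \<in> S" "\<mu> x \<noteq> 0" for x
    using z that by force
  have key: "\<exists>k<n. \<forall>x\<in>S. \<mu> x \<noteq> 0 \<longrightarrow> x = v k \<or> x = v (nx k)"
  proof -
    obtain x0 where x0: "x0 \<in> S" "\<mu> x0 \<noteq> 0"
      using mu(2) by (metis sum.neutral zero_neq_one)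
    then obtain a where a: "a < n" "x0 = v a" unfolding S_def by auto
    have ca: "cross (v a) h = c" using pos x0 a by simp
    have mxa: "cross (v m) h \<le> cross (v a) h" if "m < n" for m
      using le[of "v m"] that ca unfolding S_def by auto
    show ?thesis
    proof (cases "\<forall>x\<in>S. \<mu> x \<noteq> 0 \<longrightarrow> x = v a")
      case True
      then show ?thesis using a by blast
    next
      case False
      then obtain x1 where x1: "x1 \<in> S" "\<mu> x1 \<noteq> 0" "x1 \<noteq> v a" by blast
      then obtain b where b: "b < n" "x1 = v b" unfolding S_def by auto
      have ab: "a \<noteq> b" using x1 b a by auto
      have cb: "cross (v b) h = cross (v a) h" using pos x1 b ca by simp
      have adj: "b = nx a \<or> a = nx b" by (rule maxadj[OF h a(1) b(1) ab mxa cb])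
      have oth: "x = v a \<or> x = v b" if xS: "x \<in> S" and mx0: "\<mu> x \<noteq> 0" for x
      proof (rule ccontr)
        assume nn: "\<not> (x = v a \<or> x = v b)"
        obtain m where m: "m < n" "x = v m" using xS unfolding S_def by auto
        have "cross (v m) h = cross (v a) h" using pos xS mx0 m ca by simp
        then show False using max3[OF h a(1) b(1) m(1) ab] cb nn m by auto
      qed
      show ?thesis
      proof (cases "b = nx a")
        case True
        then show ?thesis using oth a by blast
      next
        case False
        then have "a = nx b" using adj by simp
        then show ?thesis using oth b by blast
      qed
    qed
  qed
  then obtain k where k: "k < n" "\<forall>x\<in>S. \<mu> x \<noteq> 0 \<longrightarrow> x = v k \<or> x = v (nx k)" by blast
  define T where "T = {v k, v (nx k)}"
  have TS: "T \<subseteq> S" unfolding T_def S_def using k(1) nx_lt by auto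
  have out: "\<forall>x\<in>S - T. \<mu> x = 0" using k(2) unfolding T_def by auto
  have ne: "v k \<noteq> v (nx k)" by (rule vnx_ne[OF k(1)])
  have s1: "\<mu> (v k) + \<mu> (v (nx k)) = 1"
    using mu(2) sum.mono_neutral_right[OF fS TS, of \<mu>] out ne unfolding T_def by simp
  have s2: "\<mu> (v k) *\<^sub>R v k + \<mu> (v (nx k)) *\<^sub>R v (nx k) = X"
    using mu(3) sum.mono_neutral_right[OF fS TS, of "\<lambda>x. \<mu> x *\<^sub>R x"] out ne unfolding T_def by simp
  have nn: "0 \<le> \<mu> (v k)" "0 \<le> \<mu> (v (nx k))" using mu(1) TS unfolding T_def by auto
  have m1: "\<mu> (v k) = 1 - \<mu> (v (nx k))" using s1 by simp
  have "X = (1 - \<mu> (v (nx k))) *\<^sub>R v k + \<mu> (v (nx k)) *\<^sub>R v (nx k)"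
    using s2 m1 by simp
  moreover have "\<mu> (v (nx k)) \<le> 1" using m1 nn by simp
  ultimately show ?thesis using k(1) nn by blast
qed

lemma bpt_nat:
  assumes "0 \<le> t" "t \<le> 1"
  shows "bpt n v (real m + t) = (1 - t) *\<^sub>R v (m mod n) + t *\<^sub>R v (Suc m mod n)"
proof (cases "t = 1")
  case True
  have f: "\<lfloor>real m + t\<rfloor> = int m + 1" using True by simp
  have "vx n v (int m + 1) = v (Suc m mod n)"
    unfolding vx_def by (metis nat_int of_nat_Suc zmod_int add.commute)
  then show ?thesis unfolding bpt_def f using True by (simp add: algebra_simps)
next
  case False
  then have t1: "t < 1" using assms by simp
  have f: "\<lfloor>real m + t\<rfloor> = int m" using assms t1 by (simp add: floor_eq_iff)
  have v1: "vx n v (int m) = v (m mod n)"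
    unfolding vx_def by (metis nat_int zmod_int)
  have v2: "vx n v (int m + 1) = v (Suc m mod n)"
    unfolding vx_def by (metis nat_int of_nat_Suc zmod_int add.commute)
  show ?thesis unfolding bpt_def f v1 v2 by (simp add: algebra_simps)
qed

lemma bpt_vert: "b < n \<Longrightarrow> bpt n v (real b) = v b"
  using bpt_nat[of 0 b] by simp

end


context cwp begin

lemma bpt_real: "bpt n v (real m) = v (m mod n)"
  using bpt_nat[of 0 m] by simp

lemma arc_cc_I:
  assumes "0 \<le> s0" "s0 < real n" "bpt n v s0 = X0" "s0 \<le> s1" "s1 < s0 + real n"
    "bpt n v s1 = X1" "s0 \<le> u" "u \<le> s1"
  shows "bpt n v u \<in> arc_cc n v X0 X1"
  unfolding arc_cc_def using assms by blast

lemma arc_oo_I: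
  assumes "0 \<le> s0" "s0 < real n" "bpt n v s0 = X0" "s0 \<le> s1" "s1 < s0 + real n"
    "bpt n v s1 = X1" "s0 < u" "u < s1"
  shows "bpt n v u \<in> arc_oo n v X0 X1"
  unfolding arc_oo_def using assms by blast

lemma GA:
  assumes ab: "a < n" "b < n" "a \<noteq> b" "b \<noteq> nx a"
    and k: "k < n" and t: "0 \<le> t" "t \<le> 1"
    and X: "X = (1 - t) *\<^sub>R v k + t *\<^sub>R v (nx k)"
    and s: "cross (v b - v a) (X - v a) \<le> 0"
  shows "X \<in> arc_cc n v (v b) (v a) \<and> (X \<noteq> v a \<longrightarrow> X \<noteq> v b \<longrightarrow> X \<in> arc_oo n v (v b) (v a))"
proof -
  define d where "d = off a b"
  have dn: "d < n" using off_lt ab d_def by simp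
  have d0: "d \<noteq> 0" using off_0 ab d_def by simp
  have d1: "d \<noteq> 1" using off_self1[OF ab(1)] off_inj[OF ab(1) ab(2) nx_lt] ab(4) d_def by auto
  have bix: "b = (a + d) mod n" using ix_off[OF ab(1) ab(2)] d_def ix_def by simp
  have bd: "(b + (n - d)) mod n = a"
  proof -
    have "(b + (n - d)) mod n = (a + d + (n - d)) mod n" unfolding bix by (simp add: mod_add_left_eq)
    also have "a + d + (n - d) = a + n" using dn by simp
    finally show ?thesis using ab by simp
  qed
  define s0 where "s0 = real b"
  define s1 where "s1 = real b + real (n - d)"
  have s1n: "s1 = real (b + (n - d))" unfolding s1_def by simp
  have S6: "bpt n v s1 = v a" unfolding s1n bpt_real bd ..
  have S: "0 \<le> s0" "s0 < real n" "bpt n v s0 = v b" "s0 \<le> s1" "s1 < s0 + real n" "bpt n v s1 = v a"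
    using ab dn d0 S6 unfolding s0_def s1_def
    by (auto simp: bpt_real of_nat_diff)
  define e where "e = off a k"
  have en: "e < n" using off_lt ab k e_def by simp
  have kix: "k = (a + e) mod n" using ix_off[OF ab(1) k] e_def ix_def by simp
  show ?thesis
  proof (cases "d \<le> e")
    case True
    define m where "m = b + (e - d)"
    have mk: "m mod n = k"
    proof -
      have "m mod n = (a + d + (e - d)) mod n" unfolding m_def bix by (simp add: mod_add_left_eq)
      also have "a + d + (e - d) = a + e" using True by simp
      finally show ?thesis using kix by simp
    qed
    have msk: "Suc m mod n = nx k" using mk by (metis mod_Suc_eq)
    have bu: "bpt n v (real m + t) = X" using bpt_nat[OF t, of m] mk msk X by simp
    have u0: "s0 \<le> real m + t" using t unfolding s0_def m_def by simp
    have u1: "real m + t \<le> s1" using t en True unfolding s1_def m_def by (simp add: of_nat_diff)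
    have cc: "X \<in> arc_cc n v (v b) (v a)" using arc_cc_I[OF S u0 u1] bu by simp
    have oo: "X \<in> arc_oo n v (v b) (v a)" if xa: "X \<noteq> v a" and xb: "X \<noteq> v b"
    proof -
      have "s0 < real m + t"
      proof (rule ccontr)
        assume "\<not> s0 < real m + t"
        then have "e = d" "t = 0" using u0 t True unfolding s0_def m_def by auto
        then have "k = b" using kix bix by simp
        then show False using xb X \<open>t = 0\<close> by simp
      qed
      moreover have "real m + t < s1"
      proof (rule ccontr)
        assume "\<not> real m + t < s1"
        then have "real m + t = s1" using u1 by simp
        then have "real e + t = real n" using True dn unfolding s1_def m_def by (simp add: of_nat_diff)
        then have "e = n - 1" "t = 1" using en t by linarith+
        then have "off a (nx k) = 0" using off_nx[OF ab(1) k] e_def by simp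
        then have "nx k = a" using off_0[OF ab(1) nx_lt[of k]] by simp
        then show False using xa X \<open>t = 1\<close> by simp
      qed
      ultimately have "bpt n v (real m + t) \<in> arc_oo n v (v b) (v a)" by (rule arc_oo_I[OF S])
      then show ?thesis using bu by simp
    qed
    show ?thesis using cc oo by blast
  next
    case False
    define D where "D = v b - v a"
    have sk: "cross D (v k - v a) \<ge> 0"
    proof (cases "k = a")
      case True then show ?thesis by (simp add: cross_simps)
    next
      case False
      then show ?thesis using sideL[OF ab(1) ab(2) k] \<open>\<not> d \<le> e\<close> d_def e_def D_def by simp
    qed
    have onx: "off a (nx k) = Suc e" using off_nx[OF ab(1) k] e_def False dn by simp
    have sk': "cross D (v (nx k) - v a) \<ge> 0"
    proof (cases "Suc e = d")
      case True
      then have "nx k = b" using off_inj[OF ab(1) nx_lt[of k] ab(2)] onx d_def by simp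
      then show ?thesis using D_def by (simp add: cross_simps)
    next
      case False
      have "nx k \<noteq> a" using onx off_0[OF ab(1) nx_lt[of k]] by simp
      then show ?thesis using sideL[OF ab(1) ab(2) nx_lt[of k]] onx \<open>\<not> d \<le> e\<close> False d_def D_def by simp
    qed
    have Xa: "X - v a = (1 - t) *\<^sub>R (v k - v a) + t *\<^sub>R (v (nx k) - v a)"
      unfolding X by (simp add: algebra_simps)
    have sX: "(1 - t) * cross D (v k - v a) + t * cross D (v (nx k) - v a) \<le> 0"
      using s unfolding Xa D_def by (simp add: cross_simps)
    have c1: "(1 - t) * cross D (v k - v a) \<ge> 0" using t sk by simp
    have c2: "t * cross D (v (nx k) - v a) \<ge> 0" using t sk' by simp
    have z1: "(1 - t) * cross D (v k - v a) = 0" using c1 c2 sX by linarith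
    have z2: "t * cross D (v (nx k) - v a) = 0" using c1 c2 sX by linarith
    have ka: "k = a" if "cross D (v k - v a) = 0"
    proof (rule ccontr)
      assume "k \<noteq> a"
      then show False using sideL[OF ab(1) ab(2) k] \<open>\<not> d \<le> e\<close> d_def e_def D_def that by simp
    qed
    have kb: "nx k = b" if "cross D (v (nx k) - v a) = 0"
    proof (rule ccontr)
      assume nb: "nx k \<noteq> b"
      then have "Suc e \<noteq> d" using off_inj[OF ab(1) nx_lt[of k] ab(2)] onx d_def by auto
      moreover have "nx k \<noteq> a" using onx off_0[OF ab(1) nx_lt[of k]] by simp
      ultimately show False using sideL[OF ab(1) ab(2) nx_lt[of k]] onx \<open>\<not> d \<le> e\<close> d_def D_def that by simp
    qed
    have "X = v a \<or> X = v b"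
    proof (cases "t = 0")
      case True
      then have "k = a" using z1 ka by simp
      then show ?thesis using X True by simp
    next
      case t0: False
      show ?thesis
      proof (cases "t = 1")
        case True
        then have "nx k = b" using z2 kb by simp
        then show ?thesis using X True by simp
      next
        case False
        then have "k = a" "nx k = b" using z1 z2 t0 ka kb by auto
        then show ?thesis using off_self1[OF ab(1)] d1 d_def by simp
      qed
    qed
    moreover have "v a \<in> arc_cc n v (v b) (v a)"
      using arc_cc_I[OF S, of s1] S by simp
    moreover have "v b \<in> arc_cc n v (v b) (v a)"
      using arc_cc_I[OF S, of s0] S by simp
    ultimately show ?thesis by blast
  qed
qed

end


context cwp begin

lemma exists_pos: "k < n \<Longrightarrow> \<exists>r<n. L k (v r) > 0"
proof -
  assume k: "k < n"
  have "ix k 2 < n" "ix k 2 \<noteq> k" "ix k 2 \<noteq> nx k"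
    using ix_inj[OF k, of 2 0] ix_inj[OF k, of 2 1] n3 k ix_lt ix_0[OF k] ix_Suc[of k 0]
    by auto
  then show ?thesis using edge_pos k by blast
qed

lemma convP: "x \<in> P \<Longrightarrow> y \<in> P \<Longrightarrow> 0 \<le> u \<Longrightarrow> u \<le> 1 \<Longrightarrow> (1 - u) *\<^sub>R x + u *\<^sub>R y \<in> P"
  using convexP unfolding convex_alt by blast

lemma midP: "x \<in> P \<Longrightarrow> y \<in> P \<Longrightarrow> midpoint x y \<in> P"
  using convP[of x y "1/2"] unfolding midpoint_def by (simp add: scaleR_add_right)

lemma eline_iff: "k < n \<Longrightarrow> X \<in> eline n v k \<longleftrightarrow> L k X = 0"
  unfolding eline_def using line_iff[OF vnx_ne, of k X]
  by (simp add: L_def w_def cross_antisym[of "X - v k"])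

lemma infd: "k < n \<Longrightarrow> X \<in> P \<Longrightarrow> infdist X (eline n v k) = L k X / norm (w k)"
proof -
  assume k: "k < n" and X: "X \<in> P"
  have "infdist X (eline n v k) = \<bar>cross (w k) (X - v k)\<bar> / norm (w k)"
    unfolding eline_def using infdist_line[OF vnx_ne[OF k], of X] by (simp add: w_def)
  also have "\<bar>cross (w k) (X - v k)\<bar> = L k X"
    using L_nonneg[OF k X] unfolding L_def by (simp add: cross_antisym[of "w k"])
  finally show ?thesis .
qed

end

locale cwp2 = cwp +
  fixes i j :: nat
  assumes np: "no_parallel_edges n v" and ij: "i < n" "j < n" and ch: "chasing n v i j"
begin

lemma nonpar: "k < n \<Longrightarrow> m < n \<Longrightarrow> k \<noteq> m \<Longrightarrow> cross (w k) (w m) \<noteq> 0"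
  using np unfolding no_parallel_edges_def w_def by blast

lemma isect_eq:
  assumes "k < n" "m < n" "k \<noteq> m" "L k X = 0" "L m X = 0"
  shows "isect n v k m = X"
  unfolding isect_def
proof (rule the_equality)
  show "X \<in> eline n v k \<inter> eline n v m" using assms eline_iff by simp
next
  fix Y assume "Y \<in> eline n v k \<inter> eline n v m"
  then have Y: "L k Y = 0" "L m Y = 0" using assms eline_iff by auto
  have "cross (w k) (Y - X) = 0" using L_diff[of k Y X] Y assms cross_antisym[of "w k"] by simp
  moreover have "cross (w m) (Y - X) = 0" using L_diff[of m Y X] Y assms cross_antisym[of "w m"] by simp
  ultimately have "Y - X = 0" using cross_indep_zero nonpar assms by blast
  then show "Y = X" by simp
qed

lemma ij_ne: "i \<noteq> j" using ch unfolding chasing_def by simp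

definition \<kappa> where "\<kappa> = cross (w i) (w j)"
definition q0 where "q0 = L j (v i)"
definition p0 where "p0 = L i (v (nx j))"

lemma kappa_nz: "\<kappa> \<noteq> 0" unfolding \<kappa>_def using nonpar ij ij_ne by simp

lemma Lj_line: "L j (v i + t *\<^sub>R w i) = q0 + t * \<kappa>"
  unfolding L_add q0_def \<kappa>_def by (simp add: cross_simps)

lemma Li_line: "L i (v i + t *\<^sub>R w i) = 0"
  unfolding L_add by (simp add: cross_simps L_vk)

lemma isect_ij: "isect n v i j = v i + (- q0 / \<kappa>) *\<^sub>R w i"
proof (rule isect_eq[OF ij ij_ne])
  show "L i (v i + (- q0 / \<kappa>) *\<^sub>R w i) = 0" by (rule Li_line)
  show "L j (v i + (- q0 / \<kappa>) *\<^sub>R w i) = 0" unfolding Lj_line using kappa_nz by simp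
qed

lemma chase_t: "- q0 / \<kappa> \<ge> 1"
proof -
  obtain t where t: "t \<ge> 1" "isect n v i j = v i + t *\<^sub>R w i"
    using ch unfolding chasing_def w_def by auto
  then have "v i + t *\<^sub>R w i = v i + (- q0 / \<kappa>) *\<^sub>R w i" using isect_ij by simp
  then have "(t - (- q0 / \<kappa>)) *\<^sub>R w i = 0" by (simp only: scaleR_diff_left) simp
  then have "t = - q0 / \<kappa>" using w_nz[OF ij(1)] by simp
  then show ?thesis using t by simp
qed

lemma i_ne_nxj: "i \<noteq> nx j"
proof
  assume e: "i = nx j"
  then have "q0 = 0" unfolding q0_def using L_vnx by simp
  then show False using chase_t by simp
qed

lemma q0_pos: "q0 > 0"
  unfolding q0_def using edge_pos[OF ij(2) ij(1)] ij_ne i_ne_nxj by simp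

lemma kappa_neg: "\<kappa> < 0"
proof (rule ccontr)
  assume "\<not> \<kappa> < 0"
  then have "\<kappa> > 0" using kappa_nz by simp
  then have "- q0 / \<kappa> < 0" using q0_pos by (simp add: divide_neg_pos)
  then show False using chase_t by simp
qed

lemma p0_pos: "p0 > 0"
proof -
  have "nx j \<noteq> i" using i_ne_nxj by simp
  moreover have "nx j \<noteq> nx i" using nx_inj ij ij_ne by blast
  ultimately show ?thesis unfolding p0_def using edge_pos[OF ij(1) nx_lt] by simp
qed

definition F where "F X = L i X * L j X"

lemma disprod_eq: "X \<in> P \<Longrightarrow> disprod (eline n v i) (eline n v j) X = F X / (norm (w i) * norm (w j))"
  unfolding disprod_def F_def using infd ij by simp

lemma normpos: "norm (w i) * norm (w j) > 0" using w_nz ij by simp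

lemma max_equiv: "Z \<in> P \<Longrightarrow> Y \<in> P \<Longrightarrow>
   disprod (eline n v i) (eline n v j) Y \<le> disprod (eline n v i) (eline n v j) Z \<longleftrightarrow> F Y \<le> F Z"
  using disprod_eq normpos by (simp add: divide_le_cancel)

definition M0 where "M0 = midpoint (v i) (v (nx j))"

lemma M0P: "M0 \<in> P" unfolding M0_def using midP vP ij nx_lt by blast

lemma FM0: "F M0 = p0 * q0 / 4"
  unfolding F_def M0_def L_mid p0_def q0_def using L_vk L_vnx by simp

lemma F_cont: "continuous_on P F"
  unfolding F_def L_def cross_def by (intro continuous_intros)

lemma exists_max: "\<exists>Z\<in>P. \<forall>Y\<in>P. F Y \<le> F Z"
  using continuous_attains_sup[OF compactP _ F_cont] M0P by blast

end


context cwp2 begin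

lemma uniq_max:
  assumes Z1: "Z1 \<in> P" "\<forall>Y\<in>P. F Y \<le> F Z1" and Z2: "Z2 \<in> P" "\<forall>Y\<in>P. F Y \<le> F Z2"
  shows "Z1 = Z2"
proof -
  define p1 where "p1 = L i Z1"
  define q1 where "q1 = L j Z1"
  define p2 where "p2 = L i Z2"
  define q2 where "q2 = L j Z2"
  have Mx: "F Z1 = F Z2" using Z1 Z2 by force
  have "F M0 > 0" unfolding FM0 using p0_pos q0_pos by simp
  moreover have "F M0 \<le> F Z1" using Z1(2) M0P by blast
  ultimately have pos: "F Z1 > 0" by linarith
  have nn: "p1 \<ge> 0" "q1 \<ge> 0" "p2 \<ge> 0" "q2 \<ge> 0"
    using L_nonneg ij Z1 Z2 unfolding p1_def q1_def p2_def q2_def by auto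
  have e1: "p1 * q1 = p2 * q2" using Mx unfolding F_def p1_def q1_def p2_def q2_def by simp
  have e0: "p1 * q1 > 0" using pos unfolding F_def p1_def q1_def by simp
  have "F (midpoint Z1 Z2) \<le> F Z1" using Z1 midP[OF Z1(1) Z2(1)] by blast
  then have m: "((p1 + p2)/2) * ((q1 + q2)/2) \<le> p1 * q1"
    unfolding F_def L_mid p1_def q1_def p2_def q2_def .
  have pp1: "p1 > 0" "q1 > 0" using e0 nn(1,2) by (auto simp: zero_less_mult_iff)
  have "p2 * q2 > 0" using e0 e1 by simp
  then have pp2: "p2 > 0" "q2 > 0" using nn(3,4) by (auto simp: zero_less_mult_iff)
  note pp = pp1 pp2
  have s: "p1 * q2 + p2 * q1 \<le> 2 * (p1 * q1)" using m e1 by (simp add: algebra_simps)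
  have "(p1 * q2 - p2 * q1)^2 = (p1 * q2 + p2 * q1)^2 - 4 * (p1*q1) * (p2*q2)"
    by (simp add: power2_eq_square algebra_simps)
  also have "\<dots> \<le> (2 * (p1 * q1))^2 - 4 * (p1*q1) * (p1*q1)"
  proof -
    have "0 \<le> p1 * q2 + p2 * q1" using nn by simp
    then have "(p1 * q2 + p2 * q1)^2 \<le> (2 * (p1 * q1))^2" by (rule power_mono[OF s])
    then show ?thesis using e1 by simp
  qed
  also have "\<dots> = 0" by (simp add: power2_eq_square)
  finally have "p1 * q2 = p2 * q1" by simp
  then have "p1 * q2 * q2 = p2 * q2 * q1" by simp
  then have "p1 * q2 * q2 = p1 * q1 * q1" using e1 by simp
  then have "q2 * q2 = q1 * q1" using pp by simp
  then have "q1^2 = q2^2" by (simp add: power2_eq_square)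
  then have qq: "q1 = q2" using pp by (simp add: power2_eq_imp_eq)
  then have ppe: "p1 = p2" using e1 pp by simp
  have "cross (w i) (Z1 - Z2) = 0" using L_diff[of i Z1 Z2] ppe cross_antisym[of "w i"]
    unfolding p1_def p2_def by simp
  moreover have "cross (w j) (Z1 - Z2) = 0" using L_diff[of j Z1 Z2] qq cross_antisym[of "w j"]
    unfolding q1_def q2_def by simp
  moreover have "cross (w i) (w j) \<noteq> 0" using kappa_nz \<kappa>_def by simp
  ultimately have "Z1 - Z2 = 0" using cross_indep_zero by blast
  then show ?thesis by simp
qed

end

locale cwp3 = cwp2 +
  fixes Z :: pt
  assumes ZP: "Z \<in> P" and Zmax: "\<And>Y. Y \<in> P \<Longrightarrow> F Y \<le> F Z"
begin

definition pZ where "pZ = L i Z"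
definition qZ where "qZ = L j Z"

lemma FZpos: "F Z > 0"
proof -
  have "F M0 > 0" unfolding FM0 using p0_pos q0_pos by simp
  then show ?thesis using Zmax[OF M0P] by linarith
qed

lemma pq_pos: "pZ > 0" "qZ > 0"
proof -
  have "pZ \<ge> 0" "qZ \<ge> 0" using L_nonneg ij ZP unfolding pZ_def qZ_def by auto
  moreover have "pZ * qZ > 0" using FZpos unfolding F_def pZ_def qZ_def by simp
  ultimately show "pZ > 0" "qZ > 0" by (auto simp: zero_less_mult_iff)
qed

lemma FO:
  assumes Y: "Y \<in> P"
  shows "qZ * (L i Y - pZ) + pZ * (L j Y - qZ) \<le> 0"
proof (rule ccontr)
  define \<alpha> where "\<alpha> = L i Y - pZ"
  define \<beta> where "\<beta> = L j Y - qZ"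
  define c where "c = qZ * \<alpha> + pZ * \<beta>"
  define K where "K = \<bar>\<alpha> * \<beta>\<bar>"
  assume "\<not> qZ * (L i Y - pZ) + pZ * (L j Y - qZ) \<le> 0"
  then have c0: "c > 0" unfolding c_def \<alpha>_def \<beta>_def by simp
  have K0: "K \<ge> 0" unfolding K_def by simp
  define \<tau> where "\<tau> = c / (c + K)"
  have t0: "\<tau> > 0" unfolding \<tau>_def using c0 K0 by simp
  have t1: "\<tau> \<le> 1" unfolding \<tau>_def using c0 K0 by simp
  have tK: "\<tau> * K < c"
  proof -
    have "c * K < c * (c + K)" using c0 by (simp add: algebra_simps)
    then show ?thesis unfolding \<tau>_def using c0 K0 by (simp add: divide_less_eq mult.commute)
  qed
  define Y' where "Y' = (1 - \<tau>) *\<^sub>R Z + \<tau> *\<^sub>R Y"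
  have Y'P: "Y' \<in> P" unfolding Y'_def using convP[OF ZP Y] t0 t1 by simp
  have li: "L i Y' = pZ + \<tau> * \<alpha>" unfolding Y'_def L_comb \<alpha>_def pZ_def by (simp add: algebra_simps)
  have lj: "L j Y' = qZ + \<tau> * \<beta>" unfolding Y'_def L_comb \<beta>_def qZ_def by (simp add: algebra_simps)
  have "F Y' = pZ * qZ + \<tau> * c + \<tau> * \<tau> * (\<alpha> * \<beta>)"
    unfolding F_def li lj c_def by (simp add: algebra_simps)
  moreover have "\<tau> * \<tau> * (\<alpha> * \<beta>) \<ge> - (\<tau> * \<tau> * K)"
  proof -
    have "\<alpha> * \<beta> \<ge> - K" unfolding K_def by simp
    moreover have "0 \<le> \<tau> * \<tau>" by simp
    ultimately have "\<tau> * \<tau> * (\<alpha> * \<beta>) \<ge> \<tau> * \<tau> * (- K)" by (rule mult_left_mono)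
    then show ?thesis by simp
  qed
  moreover have "\<tau> * c - \<tau> * \<tau> * K > 0"
  proof -
    have "\<tau> * (c - \<tau> * K) > 0" using t0 tK by simp
    then show ?thesis by (simp add: algebra_simps)
  qed
  ultimately have "F Y' > pZ * qZ" by linarith
  moreover have "F Z = pZ * qZ" unfolding F_def pZ_def qZ_def ..
  ultimately show False using Zmax[OF Y'P] by simp
qed

lemma Z_frontier: "Z \<in> frontier P"
proof -
  have "closure P = P" using compactP by (simp add: compact_imp_closed)
  moreover have "Z \<notin> interior P"
  proof
    assume "Z \<in> interior P"
    then obtain \<epsilon> where e: "\<epsilon> > 0" "ball Z \<epsilon> \<subseteq> P" by (auto simp: mem_interior)
    define u where "u = w j - w i"
    define \<delta> where "\<delta> = \<epsilon> / (2 * (norm u + 1))"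
    have nu: "norm u + 1 > 0" by (simp add: add_nonneg_pos)
    then have d0: "\<delta> > 0" unfolding \<delta>_def using e by simp
    have "\<delta> * norm u < \<epsilon>"
    proof -
      have "\<delta> * norm u \<le> \<delta> * (norm u + 1)" using d0 by simp
      also have "\<dots> = \<epsilon> / 2" unfolding \<delta>_def using nu by (simp add: field_simps)
      finally show ?thesis using e by simp
    qed
    then have "Z + \<delta> *\<^sub>R u \<in> ball Z \<epsilon>" using d0 by (simp add: dist_norm)
    then have YP: "Z + \<delta> *\<^sub>R u \<in> P" using e by blast
    have li: "L i (Z + \<delta> *\<^sub>R u) = pZ - \<delta> * \<kappa>"
      unfolding L_add u_def pZ_def \<kappa>_def by (simp add: cross_simps cross_antisym[of "w j"])
    have lj: "L j (Z + \<delta> *\<^sub>R u) = qZ - \<delta> * \<kappa>"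
      unfolding L_add u_def qZ_def \<kappa>_def by (simp add: cross_simps)
    have "- \<delta> * \<kappa> > 0" using d0 kappa_neg by (simp add: mult_pos_neg)
    moreover have "(pZ - \<delta> * \<kappa>) * (qZ - \<delta> * \<kappa>) =
       pZ * qZ + (- \<delta> * \<kappa>) * (pZ + qZ) + (- \<delta> * \<kappa>) * (- \<delta> * \<kappa>)"
      by (simp add: algebra_simps)
    moreover have "(- \<delta> * \<kappa>) * (pZ + qZ) > 0"
      by (rule mult_pos_pos[OF calculation(1)]) (use pq_pos in simp)
    moreover have "(- \<delta> * \<kappa>) * (- \<delta> * \<kappa>) > 0"
      by (rule mult_pos_pos[OF calculation(1) calculation(1)])
    ultimately have "(pZ - \<delta> * \<kappa>) * (qZ - \<delta> * \<kappa>) > pZ * qZ" by linarith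
    then have "F (Z + \<delta> *\<^sub>R u) > F Z" unfolding F_def li lj pZ_def qZ_def by simp
    then show False using Zmax[OF YP] by simp
  qed
  ultimately show ?thesis unfolding frontier_def using ZP by simp
qed

lemma Z_face: "\<exists>k<n. \<exists>t. 0 \<le> t \<and> t \<le> 1 \<and> Z = (1 - t) *\<^sub>R v k + t *\<^sub>R v (nx k)"
proof -
  define h where "h = qZ *\<^sub>R w i + pZ *\<^sub>R w j"
  have "cross (w i) h = pZ * \<kappa>" unfolding h_def \<kappa>_def by (simp add: cross_simps)
  then have hnz: "h \<noteq> 0" using pq_pos kappa_nz by (auto simp: cross_simps)
  have eqh: "qZ * L i Y + pZ * L j Y = cross Y h - (qZ * cross (v i) (w i) + pZ * cross (v j) (w j))" for Y
    unfolding h_def L_lin by (simp add: cross_simps algebra_simps)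
  have "cross Y h \<le> cross Z h" if "Y \<in> P" for Y
  proof -
    have "qZ * L i Y + pZ * L j Y \<le> qZ * L i Z + pZ * L j Z"
      using FO[OF that] unfolding pZ_def qZ_def by (simp add: algebra_simps)
    then show ?thesis unfolding eqh by simp
  qed
  then show ?thesis using face[OF hnz ZP] by blast
qed

end


lemma cross_gen4: "cross u v * cross d x = cross x v * cross d u + cross x u * cross (- d) v"
  by (simp add: cross_def algebra_simps)

context cwp begin

lemma chord_ident:
  "cross (w k) (w m) * cross (B - A) (X - A) =
     (L m X - L m A) * (L k B - L k A) + (L k X - L k A) * (L m A - L m B)"
proof -
  have "L m X - L m A = cross (X - A) (w m)" "L k B - L k A = cross (B - A) (w k)"
    "L k X - L k A = cross (X - A) (w k)" "L m A - L m B = cross (- (B - A)) (w m)"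
    by (simp_all add: L_diff)
  then show ?thesis using cross_gen4[of "w k" "w m" "B - A" "X - A"] by simp
qed

end

context cwp2 begin

lemma farthest:
  assumes k: "k < n"
  shows "\<exists>a<n. farthest_vertex n v k = v a \<and> (\<forall>m<n. L k (v m) \<le> L k (v a))"
proof -
  define f where "f m = L k (v m)" for m
  have fin: "finite (f ` {..<n})" "f ` {..<n} \<noteq> {}" using npos by auto
  obtain a where a: "a < n" "f a = Max (f ` {..<n})" using Max_in[OF fin] by auto
  have amax: "\<forall>m<n. f m \<le> f a" using a Max_ge[OF fin(1)] by auto
  obtain r where r: "r < n" "L k (v r) > 0" using exists_pos[OF k] by blast
  have fa_pos: "f a > 0" using amax r unfolding f_def by force
  have nwk: "norm (w k) > 0" using w_nz[OF k] by simp
  have idv: "infdist (v m) (eline n v k) = f m / norm (w k)" if "m < n" for m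
    using infd[OF k vP[OF that]] f_def by simp
  have "farthest_vertex n v k = v a"
    unfolding farthest_vertex_def
  proof (rule the_equality)
    show "v a \<in> v ` {..<n} \<and> (\<forall>Y\<in>v ` {..<n}. infdist Y (eline n v k) \<le> infdist (v a) (eline n v k))"
      using a amax idv nwk by (auto simp: divide_right_mono)
  next
    fix X assume X: "X \<in> v ` {..<n} \<and> (\<forall>Y\<in>v ` {..<n}. infdist Y (eline n v k) \<le> infdist X (eline n v k))"
    then obtain m where m: "m < n" "X = v m" by auto
    have "infdist (v a) (eline n v k) \<le> infdist (v m) (eline n v k)" using X a m by auto
    then have "f a \<le> f m" using idv a m nwk by (simp add: divide_le_cancel)
    then have fe: "f m = f a" using amax m by force
    show "X = v a"
    proof (rule ccontr)
      assume "X \<noteq> v a"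
      then have ma: "m \<noteq> a" using m by auto
      have mx: "cross (v m') (w k) \<le> cross (v a) (w k)" if "m' < n" for m'
        using amax that unfolding f_def L_lin by force
      have eqc: "cross (v m) (w k) = cross (v a) (w k)" using fe unfolding f_def L_lin by simp
      have adj: "m = nx a \<or> a = nx m" by (rule maxadj[OF w_nz[OF k] a(1) m(1) ma[symmetric] mx eqc])
      then show False
      proof
        assume "m = nx a"
        then have "cross (w a) (w k) = 0" using fe L_diff[of k "v m" "v a"] unfolding f_def w_def by simp
        then have "a = k" using nonpar[OF a(1) k] by auto
        then show False using fa_pos L_vk unfolding f_def by simp
      next
        assume "a = nx m"
        then have "cross (w m) (w k) = 0" using fe L_diff[of k "v a" "v m"] unfolding f_def w_def by simp
        then have "m = k" using nonpar[OF m(1) k] by auto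
        then show False using fa_pos fe L_vk unfolding f_def by simp
      qed
    qed
  qed
  then show ?thesis using a amax unfolding f_def by blast
qed

end

context cwp3 begin

lemma partA: "cross (v (nx j) - v i) (Z - v i) \<le> 0"
proof (rule ccontr)
  assume "\<not> ?thesis"
  then have s: "cross (v (nx j) - v i) (Z - v i) > 0" by simp
  have id: "\<kappa> * cross (v (nx j) - v i) (Z - v i) = p0 * qZ + q0 * pZ - p0 * q0"
    using chord_ident[of i j "v (nx j)" "v i" Z] unfolding \<kappa>_def p0_def q0_def pZ_def qZ_def
    by (simp add: L_vk L_vnx algebra_simps)
  have "\<kappa> * cross (v (nx j) - v i) (Z - v i) < 0" using s kappa_neg by (simp add: mult_neg_pos)
  then have lt: "p0 * qZ + q0 * pZ < p0 * q0" using id by simp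
  define A1 where "A1 = p0 * qZ"
  define B1 where "B1 = q0 * pZ"
  have A1p: "A1 > 0" "B1 > 0" using p0_pos q0_pos pq_pos A1_def B1_def by simp_all
  have "(A1 + B1)^2 < (p0 * q0)^2"
    by (rule power_strict_mono) (use lt A1p A1_def B1_def in simp_all)
  moreover have "4 * A1 * B1 \<le> (A1 + B1)^2"
  proof -
    have "0 \<le> (A1 - B1)^2" by simp
    then show ?thesis by (simp add: power2_eq_square algebra_simps)
  qed
  ultimately have "(p0 * q0) * (4 * (pZ * qZ)) < (p0 * q0) * (p0 * q0)"
    unfolding A1_def B1_def by (simp add: power2_eq_square algebra_simps)
  then have "4 * (pZ * qZ) < p0 * q0" using p0_pos q0_pos by (simp add: mult_less_cancel_left_pos)
  then have "F Z < p0 * q0 / 4" unfolding F_def pZ_def qZ_def by simp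
  then show False using Zmax[OF M0P] FM0 by simp
qed

lemma Z_ne_vi: "Z \<noteq> v i"
  using pq_pos L_vk unfolding pZ_def by auto

lemma Z_ne_vnxj: "Z \<noteq> v (nx j)"
  using pq_pos L_vnx unfolding qZ_def by auto

lemma Z_arcA: "Z \<in> arc_oo n v (v (nx j)) (v i)"
proof -
  obtain k t where kt: "k < n" "0 \<le> t" "t \<le> 1" "Z = (1 - t) *\<^sub>R v k + t *\<^sub>R v (nx k)"
    using Z_face by blast
  have "nx j \<noteq> nx i" using nx_inj ij ij_ne by blast
  then show ?thesis
    using GA[OF ij(1) nx_lt i_ne_nxj _ kt partA] Z_ne_vi Z_ne_vnxj by simp
qed

end


context cwp3 begin

lemma Z_arcB: "Z \<in> arc_cc n v (farthest_vertex n v i) (farthest_vertex n v j)"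
proof -
  obtain a where a: "a < n" "farthest_vertex n v i = v a" "\<forall>m<n. L i (v m) \<le> L i (v a)"
    using farthest[OF ij(1)] by blast
  obtain b where b: "b < n" "farthest_vertex n v j = v b" "\<forall>m<n. L j (v m) \<le> L j (v b)"
    using farthest[OF ij(2)] by blast
  define PP where "PP = L i (v a)"
  define QQ where "QQ = L j (v b)"
  define p2 where "p2 = L i (v b)"
  define q1 where "q1 = L j (v a)"
  have Pb: "L i X \<le> PP" if "X \<in> P" for X using L_le_max[of i PP X] a(3) that PP_def by blast
  have Qb: "L j X \<le> QQ" if "X \<in> P" for X using L_le_max[of j QQ X] b(3) that QQ_def by blast
  show ?thesis
  proof (cases "a = b")
    case True
    have "F Y \<le> F (v a)" if "Y \<in> P" for Y
    proof -
      have "L i Y * L j Y \<le> L i (v a) * L j (v a)"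
        using Pb[OF that] Qb[OF that] L_nonneg[OF ij(1) that] L_nonneg[OF ij(2) that]
          L_nonneg[OF ij(1) vP[OF a(1)]] True PP_def QQ_def
        by (simp add: mult_mono)
      then show ?thesis unfolding F_def .
    qed
    then have "Z = v a" using uniq_max[OF ZP _ vP[OF a(1)]] Zmax by blast
    moreover have "bpt n v (real a) \<in> arc_cc n v (v a) (v a)"
      by (rule arc_cc_I) (use a(1) npos bpt_vert[OF a(1)] in auto)
    ultimately show ?thesis using a(2) b(2) True bpt_vert[OF a(1)] by simp
  next
    case False
    have qQ: "q0 \<le> QQ" using b(3) ij(1) unfolding q0_def QQ_def by blast
    have pP: "p2 \<le> PP" using a(3) b(1) unfolding p2_def PP_def by blast
    have qQ1: "q1 \<le> QQ" using b(3) a(1) unfolding q1_def QQ_def by blast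
    have p2n: "p2 \<ge> 0" using L_nonneg[OF ij(1) vP[OF b(1)]] p2_def by simp
    obtain r where r: "r < n" "L i (v r) > 0" using exists_pos[OF ij(1)] by blast
    have PPpos: "PP > 0" using a(3) r unfolding PP_def by force
    have anb: "a \<noteq> nx b"
    proof
      assume abn: "a = nx b"
      have "i \<noteq> b"
      proof
        assume "i = b" then have "PP = 0" using abn L_vnx PP_def by simp
        then show False using PPpos by simp
      qed
      moreover have "i \<noteq> a"
      proof
        assume "i = a" then have "PP = 0" using L_vk PP_def by simp
        then show False using PPpos by simp
      qed
      ultimately have "L b (v i) > 0" using edge_pos[OF b(1) ij(1)] abn by simp
      then have sneg: "cross (v a - v b) (v i - v b) < 0"
        unfolding L_def w_def abn using cross_antisym[of "v i - v b"] by simp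
      have "\<kappa> * cross (v a - v b) (v i - v b) = (q0 - QQ) * (PP - p2) + (0 - p2) * (QQ - q1)"
        using chord_ident[of i j "v a" "v b" "v i"] unfolding \<kappa>_def q0_def QQ_def PP_def p2_def q1_def
        by (simp add: L_vk)
      moreover have "(q0 - QQ) * (PP - p2) \<le> 0" using qQ pP by (simp add: mult_nonpos_nonneg)
      moreover have "(0 - p2) * (QQ - q1) \<le> 0" using p2n qQ1 by (simp add: mult_nonpos_nonneg)
      ultimately have "\<kappa> * cross (v a - v b) (v i - v b) \<le> 0" by linarith
      then have "cross (v a - v b) (v i - v b) \<ge> 0" using kappa_neg by (simp add: mult_le_0_iff)
      then show False using sneg by simp
    qed
    have ineq: "cross (v a - v b) (Z - v b) \<le> 0"
    proof -
      have fa: "qZ * (PP - pZ) + pZ * (q1 - qZ) \<le> 0" using FO[OF vP[OF a(1)]] PP_def q1_def by simp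
      have fb: "qZ * (p2 - pZ) + pZ * (QQ - qZ) \<le> 0" using FO[OF vP[OF b(1)]] p2_def QQ_def by simp
      have pZP: "pZ \<le> PP" using Pb[OF ZP] pZ_def by simp
      have qZQ: "qZ \<le> QQ" using Qb[OF ZP] qZ_def by simp
      define A1 where "A1 = qZ * (PP - pZ)"
      define B1 where "B1 = pZ * (qZ - q1)"
      define A2 where "A2 = pZ * (QQ - qZ)"
      define B2 where "B2 = qZ * (pZ - p2)"
      have h1: "0 \<le> A1" "A1 \<le> B1" "0 \<le> A2" "A2 \<le> B2"
        using pq_pos pZP qZQ fa fb unfolding A1_def B1_def A2_def B2_def by (simp_all add: algebra_simps)
      have "A1 * A2 \<le> B1 * B2" by (rule mult_mono) (use h1 in auto)
      then have "(pZ * qZ) * ((PP - pZ) * (QQ - qZ)) \<le> (pZ * qZ) * ((pZ - p2) * (qZ - q1))"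
        unfolding A1_def B1_def A2_def B2_def by (simp add: algebra_simps)
      then have key: "(PP - pZ) * (QQ - qZ) \<le> (pZ - p2) * (qZ - q1)"
        using pq_pos by (simp add: mult_le_cancel_left_pos)
      have "\<kappa> * cross (v a - v b) (Z - v b) = (qZ - QQ) * (PP - p2) + (pZ - p2) * (QQ - q1)"
        using chord_ident[of i j "v a" "v b" Z] unfolding \<kappa>_def pZ_def qZ_def QQ_def PP_def p2_def q1_def
        by simp
      also have "\<dots> = (pZ - p2) * (qZ - q1) - (PP - pZ) * (QQ - qZ)" by (simp add: algebra_simps)
      finally have "\<kappa> * cross (v a - v b) (Z - v b) \<ge> 0" using key by simp
      then show ?thesis using kappa_neg by (simp add: zero_le_mult_iff)
    qed
    obtain k t where kt: "k < n" "0 \<le> t" "t \<le> 1" "Z = (1 - t) *\<^sub>R v k + t *\<^sub>R v (nx k)"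
      using Z_face by blast
    have "b \<noteq> a" using False by simp
    then have "Z \<in> arc_cc n v (v a) (v b)" using GA[OF b(1) a(1) _ anb kt ineq] by simp
    then show ?thesis using a(2) b(2) by simp
  qed
qed

lemma Z_edge:
  assumes k: "k < n" and ze: "Z \<in> edge n v k"
  shows "Z = midpoint (isect n v i k) (isect n v j k)"
proof -
  obtain u where u: "0 < u" "u < 1" "Z = (1 - u) *\<^sub>R v k + u *\<^sub>R v (nx k)"
    using ze unfolding edge_def in_segment(2) by blast
  have Lz: "L m Z = (1 - u) * L m (v k) + u * L m (v (nx k))" for m
    unfolding u(3) L_comb ..
  have ki: "k \<noteq> i"
  proof
    assume "k = i" then have "pZ = 0" using Lz[of i] L_vk L_vnx pZ_def by simp
    then show False using pq_pos by simp
  qed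
  have kj: "k \<noteq> j"
  proof
    assume "k = j" then have "qZ = 0" using Lz[of j] L_vk L_vnx qZ_def by simp
    then show False using pq_pos by simp
  qed
  have Lk: "L k Z = 0" using Lz[of k] L_vk L_vnx by simp
  have Zw: "Z = v k + u *\<^sub>R w k" unfolding u(3) w_def by (simp add: algebra_simps)
  have vnx: "v (nx k) = Z + (1 - u) *\<^sub>R w k" unfolding Zw w_def by (simp add: algebra_simps)
  have vk: "v k = Z + (- u) *\<^sub>R w k" unfolding Zw by simp
  define \<alpha> where "\<alpha> = cross (w k) (w i)"
  define \<beta> where "\<beta> = cross (w k) (w j)"
  have an: "\<alpha> \<noteq> 0" unfolding \<alpha>_def using nonpar[OF k ij(1) ki] .
  have bn: "\<beta> \<noteq> 0" unfolding \<beta>_def using nonpar[OF k ij(2) kj] .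
  have li: "L i (Z + s *\<^sub>R w k) = pZ + s * \<alpha>" for s
    unfolding L_add pZ_def \<alpha>_def by (simp add: cross_simps)
  have lj: "L j (Z + s *\<^sub>R w k) = qZ + s * \<beta>" for s
    unfolding L_add qZ_def \<beta>_def by (simp add: cross_simps)
  have lk: "L k (Z + s *\<^sub>R w k) = 0" for s
    unfolding L_add Lk by (simp add: cross_simps)
  have f1: "(1 - u) * (qZ * \<alpha> + pZ * \<beta>) \<le> 0"
    using FO[OF vP[OF nx_lt[of k]]] unfolding vnx li lj by (simp add: algebra_simps)
  have f2: "(- u) * (qZ * \<alpha> + pZ * \<beta>) \<le> 0"
    using FO[OF vP[OF k]] unfolding vk li lj by (simp add: algebra_simps)
  have c0: "qZ * \<alpha> + pZ * \<beta> = 0"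
  proof -
    have "qZ * \<alpha> + pZ * \<beta> \<le> 0" using f1 u(2) by (simp add: mult_le_0_iff)
    moreover have "qZ * \<alpha> + pZ * \<beta> \<ge> 0" using f2 u(1) by (simp add: zero_le_mult_iff)
    ultimately show ?thesis by simp
  qed
  define s1 where "s1 = - pZ / \<alpha>"
  define s2 where "s2 = - qZ / \<beta>"
  have I1: "isect n v i k = Z + s1 *\<^sub>R w k"
  proof (rule isect_eq[OF ij(1) k ki[symmetric]])
    show "L i (Z + s1 *\<^sub>R w k) = 0" unfolding li s1_def using an by simp
    show "L k (Z + s1 *\<^sub>R w k) = 0" by (rule lk)
  qed
  have I2: "isect n v j k = Z + s2 *\<^sub>R w k"
  proof (rule isect_eq[OF ij(2) k kj[symmetric]])
    show "L j (Z + s2 *\<^sub>R w k) = 0" unfolding lj s2_def using bn by simp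
    show "L k (Z + s2 *\<^sub>R w k) = 0" by (rule lk)
  qed
  have "s1 + s2 = - (qZ * \<alpha> + pZ * \<beta>) / (\<alpha> * \<beta>)"
    unfolding s1_def s2_def using an bn by (simp add: field_simps)
  then have ss: "s2 = - s1" using c0 by simp
  have "(Z + s1 *\<^sub>R w k) + (Z + (- s1) *\<^sub>R w k) = (2::real) *\<^sub>R Z"
    by (simp add: scaleR_2)
  then show ?thesis unfolding I1 I2 ss midpoint_def by simp
qed

end


theorem lemma4:
  fixes n :: nat and v :: "nat \<Rightarrow> real \<times> real" and i j :: nat
  assumes "cw_convex_polygon n v"
    and "no_parallel_edges n v"
    and "i < n" and "j < n"
    and "chasing n v i j"
  shows "(\<exists>!Z. Z \<in> polygon n v \<and>
            (\<forall>Y \<in> polygon n v. disprod (eline n v i) (eline n v j) Y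
                               \<le> disprod (eline n v i) (eline n v j) Z))
       \<and> (\<forall>Z. Z \<in> polygon n v \<and>
            (\<forall>Y \<in> polygon n v. disprod (eline n v i) (eline n v j) Y
                               \<le> disprod (eline n v i) (eline n v j) Z)
          \<longrightarrow> Z \<in> frontier (polygon n v)
            \<and> Z \<in> arc_cc n v (farthest_vertex n v i) (farthest_vertex n v j)
            \<and> Z \<in> arc_oo n v (v (Suc j mod n)) (v i)
            \<and> (\<forall>k<n. Z \<in> edge n v k \<longrightarrow> Z = midpoint (isect n v i k) (isect n v j k)))"
proof -
  interpret cwp2 n v i j using assms by unfold_locales auto
  have Peq: "polygon n v = P" by (rule P_eq)
  have equiv: "(Z \<in> polygon n v \<and> (\<forall>Y \<in> polygon n v. disprod (eline n v i) (eline n v j) Y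
                               \<le> disprod (eline n v i) (eline n v j) Z)) \<longleftrightarrow>
               (Z \<in> P \<and> (\<forall>Y\<in>P. F Y \<le> F Z))" for Z
  proof (cases "Z \<in> P")
    case True
    have "(\<forall>Y\<in>P. disprod (eline n v i) (eline n v j) Y \<le> disprod (eline n v i) (eline n v j) Z)
       \<longleftrightarrow> (\<forall>Y\<in>P. F Y \<le> F Z)"
    proof
      assume H: "\<forall>Y\<in>P. disprod (eline n v i) (eline n v j) Y \<le> disprod (eline n v i) (eline n v j) Z"
      show "\<forall>Y\<in>P. F Y \<le> F Z"
      proof
        fix Y assume "Y \<in> P"
        then show "F Y \<le> F Z" using H max_equiv[OF True \<open>Y \<in> P\<close>] by simp
      qed
    next
      assume H: "\<forall>Y\<in>P. F Y \<le> F Z"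
      show "\<forall>Y\<in>P. disprod (eline n v i) (eline n v j) Y \<le> disprod (eline n v i) (eline n v j) Z"
      proof
        fix Y assume "Y \<in> P"
        then show "disprod (eline n v i) (eline n v j) Y \<le> disprod (eline n v i) (eline n v j) Z"
          using H max_equiv[OF True \<open>Y \<in> P\<close>] by simp
      qed
    qed
    then show ?thesis unfolding Peq using True by simp
  next
    case False
    then show ?thesis unfolding Peq by simp
  qed
  have ex1: "\<exists>!Z. Z \<in> P \<and> (\<forall>Y\<in>P. F Y \<le> F Z)"
  proof -
    obtain Z0 where Z0: "Z0 \<in> P" "\<forall>Y\<in>P. F Y \<le> F Z0" using exists_max by blast
    show ?thesis
    proof (rule ex1I[of _ Z0])
      show "Z0 \<in> P \<and> (\<forall>Y\<in>P. F Y \<le> F Z0)" using Z0 by simp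
    next
      fix Z1 assume "Z1 \<in> P \<and> (\<forall>Y\<in>P. F Y \<le> F Z1)"
      then show "Z1 = Z0" using uniq_max[of Z1 Z0] Z0 by simp
    qed
  qed
  have rest: "Z \<in> frontier P
            \<and> Z \<in> arc_cc n v (farthest_vertex n v i) (farthest_vertex n v j)
            \<and> Z \<in> arc_oo n v (v (Suc j mod n)) (v i)
            \<and> (\<forall>k<n. Z \<in> edge n v k \<longrightarrow> Z = midpoint (isect n v i k) (isect n v j k))"
    if "Z \<in> P" "\<forall>Y\<in>P. F Y \<le> F Z" for Z
  proof -
    interpret cwp3 n v i j Z using that by unfold_locales auto
    have "\<forall>k<n. Z \<in> edge n v k \<longrightarrow> Z = midpoint (isect n v i k) (isect n v j k)"
      using Z_edge by simp
    then show ?thesis using Z_frontier Z_arcB Z_arcA by simp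
  qed
  have equiv': "(Z \<in> P \<and> (\<forall>Y \<in> P. disprod (eline n v i) (eline n v j) Y
                               \<le> disprod (eline n v i) (eline n v j) Z)) \<longleftrightarrow>
               (Z \<in> P \<and> (\<forall>Y\<in>P. F Y \<le> F Z))" for Z
    using equiv[of Z] unfolding Peq .
  show ?thesis unfolding Peq equiv' using ex1 rest by blast
qed


end
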